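(* If $G$ is a regular graph on $d+2$ vertices that is not a complete multipartite graph, then $G$ has a spherical representation in $\mathbb{R}^d$.
   Context: Graphs are finite and simple. A finite set $S\subset\mathbb{R}^d$ is a 2-distance set if $\{\|p-q\| : p,q\in S, p\neq q\}$ has exactly two elements $\alpha_1>\alpha_2$; its associated graph has vertex set $S$ with $p,q$ adjacent iff $\|p-q\|=\alpha_1$. $G$ has a spherical representation in $\mathbb{R}^d$ if some 2-distance set in $\mathbb{R}^d$ lying on a $(d-1)$-dimensional sphere has associated graph $G$. *)

theory Defs
  imports "HOL-Analysis.Analysis" "HOL-Library.Disjoint_Sets"
begin

definition simple_graph :: "'v set \<Rightarrow> ('v \<Rightarrow> 'v \<Rightarrow> bool) \<Rightarrow> bool" where
  "simple_graph V E \<longleftrightarrow> finite V \<and> (\<forall>u v. E u v \<longrightarrow> u \<in> V \<and> v \<in> V)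
     \<and> (\<forall>u v. E u v \<longrightarrow> E v u) \<and> (\<forall>u. \<not> E u u)"

definition degree :: "'v set \<Rightarrow> ('v \<Rightarrow> 'v \<Rightarrow> bool) \<Rightarrow> 'v \<Rightarrow> nat" where
  "degree V E v = card {u \<in> V. E v u}"

definition regular_graph :: "'v set \<Rightarrow> ('v \<Rightarrow> 'v \<Rightarrow> bool) \<Rightarrow> bool" where
  "regular_graph V E \<longleftrightarrow> (\<exists>k. \<forall>v\<in>V. degree V E v = k)"

definition complete_multipartite :: "'v set \<Rightarrow> ('v \<Rightarrow> 'v \<Rightarrow> bool) \<Rightarrow> bool" where
  "complete_multipartite V E \<longleftrightarrow> (\<exists>P. partition_on V P \<and>
     (\<forall>u\<in>V. \<forall>v\<in>V. E u v \<longleftrightarrow> \<not> (\<exists>A\<in>P. u \<in> A \<and> v \<in> A)))"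

definition distances :: "'a::metric_space set \<Rightarrow> real set" where
  "distances S = {dist p q | p q. p \<in> S \<and> q \<in> S \<and> p \<noteq> q}"

definition two_distance_set :: "'a::metric_space set \<Rightarrow> bool" where
  "two_distance_set S \<longleftrightarrow> finite S \<and> card (distances S) = 2"

definition assoc_adj :: "'a::metric_space set \<Rightarrow> 'a \<Rightarrow> 'a \<Rightarrow> bool" where
  "assoc_adj S p q \<longleftrightarrow> p \<in> S \<and> q \<in> S \<and> p \<noteq> q \<and> dist p q = Max (distances S)"

definition on_sphere :: "'a::euclidean_space set \<Rightarrow> bool" where
  "on_sphere S \<longleftrightarrow> (\<exists>c r. r > 0 \<and> S \<subseteq> sphere c r)"

definition spherical_rep :: "'v set \<Rightarrow> ('v \<Rightarrow> 'v \<Rightarrow> bool) \<Rightarrow> ('v \<Rightarrow> 'a::euclidean_space) \<Rightarrow> bool" where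
  "spherical_rep V E f \<longleftrightarrow> inj_on f V \<and> two_distance_set (f ` V) \<and> on_sphere (f ` V) \<and>
     (\<forall>u\<in>V. \<forall>v\<in>V. E u v \<longleftrightarrow> assoc_adj (f ` V) (f u) (f v))"

end

theory Submission
  imports Defs "HOL-Library.Cardinality"
begin

definition psd :: "'a set \<Rightarrow> ('a \<Rightarrow> 'a \<Rightarrow> real) \<Rightarrow> bool" where
  "psd I G \<longleftrightarrow> (\<forall>c. 0 \<le> (\<Sum>j\<in>I. \<Sum>l\<in>I. c j * c l * G j l))"

lemma qform_insert:
  assumes "finite I" "i \<notin> I"
  shows "(\<Sum>a\<in>insert i I. \<Sum>b\<in>insert i I. c a * c b * G a b) =
    c i * c i * G i i + (\<Sum>b\<in>I. c i * c b * G i b) + (\<Sum>a\<in>I. c a * c i * G a i)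
    + (\<Sum>a\<in>I. \<Sum>b\<in>I. c a * c b * G a b)"
  using assms by (simp add: sum.insert sum.distrib algebra_simps)

lemma chol:
  assumes "finite I"
  shows "psd I G \<Longrightarrow> (\<forall>j l. G j l = G l j) \<Longrightarrow>
     \<exists>f. \<forall>j\<in>I. \<forall>l\<in>I. (\<Sum>k\<in>I. f j k * f l k) = G j l"
  using assms
proof (induction I arbitrary: G rule: finite_induct)
  case empty
  then show ?case by simp
next
  case (insert i I)
  note psdG = insert.prems(1)[unfolded psd_def, rule_format]
  have symG: "\<And>j l. G j l = G l j" using insert.prems(2) by blast
  have Gii: "G i i \<ge> 0"
  proof -
    define c where "c = (\<lambda>k. if k = i then 1 else (0::real))"
    have cI: "\<And>a. a \<in> I \<Longrightarrow> c a = 0" using insert.hyps by (auto simp: c_def)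
    have z: "(\<Sum>b\<in>I. c i * c b * G i b) = 0" "(\<Sum>a\<in>I. c a * c i * G a i) = 0"
       "(\<Sum>a\<in>I. \<Sum>b\<in>I. c a * c b * G a b) = 0" by (auto intro!: sum.neutral simp: cI)
    have "0 \<le> (\<Sum>a\<in>insert i I. \<Sum>b\<in>insert i I. c a * c b * G a b)" by (rule psdG)
    also have "\<dots> = G i i"
      using insert.hyps by (subst qform_insert) (auto simp: z, simp add: c_def)
    finally show ?thesis .
  qed
  have zero: "G i j = 0" if "G i i = 0" "j \<in> I" for j
  proof (rule ccontr)
    assume ne: "G i j \<noteq> 0"
    define t where "t = - (G j j + 1) / (2 * G i j)"
    define c where "c = (\<lambda>k. if k = i then t else if k = j then 1 else (0::real))"
    have ij: "i \<noteq> j" using that insert.hyps by auto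
    have "0 \<le> (\<Sum>a\<in>insert i I. \<Sum>b\<in>insert i I. c a * c b * G a b)" by (rule psdG)
    also have "\<dots> = t * t * G i i + t * G i j + t * G j i + G j j"
    proof -
      have I: "I = insert j (I - {j})" using that by auto
      have cI: "\<And>a. a \<in> I - {j} \<Longrightarrow> c a = 0" using insert.hyps by (auto simp: c_def)
      have z: "(\<Sum>b\<in>I-{j}. c j * c b * G j b) = 0" "(\<Sum>a\<in>I-{j}. c a * c j * G a j) = 0"
       "(\<Sum>a\<in>I-{j}. \<Sum>b\<in>I-{j}. c a * c b * G a b) = 0"
       "(\<Sum>b\<in>I-{j}. c i * c b * G i b) = 0" "(\<Sum>a\<in>I-{j}. c a * c i * G a i) = 0"
         by (auto intro!: sum.neutral simp: cI)
      have *: "(\<Sum>a\<in>I. \<Sum>b\<in>I. c a * c b * G a b) = G j j"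
        using insert.hyps ij by (subst (1 2) I, subst qform_insert) (auto simp: z, simp add: c_def)
      have **: "(\<Sum>b\<in>I. c i * c b * G i b) = t * G i j"
        using insert.hyps ij by (subst I, subst sum.insert) (simp_all add: z, simp add: c_def)
      have ***: "(\<Sum>a\<in>I. c a * c i * G a i) = t * G j i"
        using insert.hyps ij by (subst I, subst sum.insert) (simp_all add: z, simp add: c_def)
      show ?thesis using insert.hyps by (subst qform_insert) (simp_all add: * ** ***, simp add: c_def)
    qed
    also have "\<dots> = -1" using that ne by (simp add: t_def symG[of j i] field_simps)
    finally show False by simp
  qed
  define G' where "G' = (\<lambda>j l. G j l - G i j * G i l / G i i)"
  have psd': "psd I G'"
    unfolding psd_def
  proof
    fix c :: "_ \<Rightarrow> real"
    define s where "s = (\<Sum>j\<in>I. c j * G i j)"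
    define x where "x = c(i := - s / G i i)"
    have xI: "\<And>a. a \<in> I \<Longrightarrow> x a = c a" using insert.hyps by (auto simp: x_def)
    have "0 \<le> (\<Sum>a\<in>insert i I. \<Sum>b\<in>insert i I. x a * x b * G a b)" by (rule psdG)
    also have "\<dots> = x i * x i * G i i + 2 * x i * s + (\<Sum>a\<in>I. \<Sum>b\<in>I. c a * c b * G a b)"
    proof -
      have e1: "(\<Sum>b\<in>I. x i * x b * G i b) = x i * s"
        unfolding s_def sum_distrib_left by (rule sum.cong) (auto simp: xI)
      have e2: "(\<Sum>a\<in>I. x a * x i * G a i) = x i * s"
        unfolding s_def sum_distrib_left by (rule sum.cong) (auto simp: xI symG[of _ i])
      have e3: "(\<Sum>a\<in>I. \<Sum>b\<in>I. x a * x b * G a b) = (\<Sum>a\<in>I. \<Sum>b\<in>I. c a * c b * G a b)"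
        by (intro sum.cong) (auto simp: xI)
      show ?thesis by (simp only: qform_insert[OF insert.hyps] e1 e2 e3)
    qed
    also have "\<dots> = (\<Sum>j\<in>I. \<Sum>l\<in>I. c j * c l * G' j l)"
    proof (cases "G i i = 0")
      case True
      then have "s = 0" using zero by (auto simp: s_def)
      then show ?thesis using True by (simp add: G'_def x_def)
    next
      case False
      have "(\<Sum>j\<in>I. \<Sum>l\<in>I. c j * c l * G' j l) = (\<Sum>j\<in>I. \<Sum>l\<in>I. c j * c l * G j l)
         - (\<Sum>j\<in>I. \<Sum>l\<in>I. (c j * G i j) * (c l * G i l)) / G i i"
        by (simp add: G'_def algebra_simps sum_subtractf sum_divide_distrib)
      also have "(\<Sum>j\<in>I. \<Sum>l\<in>I. (c j * G i j) * (c l * G i l)) = s * s"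
        by (simp add: s_def sum_product)
      finally show ?thesis using False by (simp add: x_def field_simps power2_eq_square)
    qed
    finally show "0 \<le> (\<Sum>j\<in>I. \<Sum>l\<in>I. c j * c l * G' j l)" .
  qed
  have "\<forall>j l. G' j l = G' l j" by (auto simp: G'_def symG mult.commute)
  then obtain f' where f': "\<And>j l. j \<in> I \<Longrightarrow> l \<in> I \<Longrightarrow> (\<Sum>k\<in>I. f' j k * f' l k) = G' j l"
    using insert.IH psd' by blast
  define f where "f = (\<lambda>j. if j = i then (\<lambda>k. if k = i then sqrt (G i i) else 0)
                          else (f' j)(i := G i j / sqrt (G i i)))"
  have sq: "sqrt (G i i) * sqrt (G i i) = G i i" using Gii by simp
  have c1: "(\<Sum>k\<in>insert i I. f j k * f l k) = G j l" if "j \<in> I" "l \<in> I" for j l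
  proof -
    have "j \<noteq> i" "l \<noteq> i" using that insert.hyps by auto
    then have "(\<Sum>k\<in>insert i I. f j k * f l k) = G i j / sqrt (G i i) * (G i l / sqrt (G i i))
       + (\<Sum>k\<in>I. f' j k * f' l k)"
      using insert.hyps by (simp add: f_def sum.insert) (rule sum.cong, auto)
    also have "\<dots> = G j l" using that sq Gii by (simp add: f' G'_def symG[of j i])
    finally show ?thesis .
  qed
  have c2: "(\<Sum>k\<in>insert i I. f i k * f l k) = G i l" if "l \<in> I" for l
  proof -
    have "l \<noteq> i" using that insert.hyps by auto
    then have "(\<Sum>k\<in>insert i I. f i k * f l k) = sqrt (G i i) * (G i l / sqrt (G i i))"
      using insert.hyps by (simp add: f_def sum.insert) (auto intro!: sum.neutral)
    also have "\<dots> = G i l" using zero[OF _ that] Gii by (cases "G i i = 0") auto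
    finally show ?thesis .
  qed
  have c3: "(\<Sum>k\<in>insert i I. f i k * f i k) = G i i"
    using insert.hyps sq by (simp add: f_def sum.insert) (auto intro!: sum.neutral)
  show ?case
  proof (intro exI ballI)
    fix j l assume j: "j \<in> insert i I" and l: "l \<in> insert i I"
    show "(\<Sum>k\<in>insert i I. f j k * f l k) = G j l"
    proof (cases "j = i")
      case True
      then show ?thesis using l c2 c3 by auto
    next
      case False
      then have jI: "j \<in> I" using j by auto
      show ?thesis
      proof (cases "l = i")
        case True
        have "(\<Sum>k\<in>insert i I. f j k * f l k) = (\<Sum>k\<in>insert i I. f i k * f j k)"
          using True by (simp add: mult.commute)
        also have "\<dots> = G j l" using c2[OF jI] True symG[of i j] by simp
        finally show ?thesis .
      next
        case False
        then show ?thesis using l jI c1 by auto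
      qed
    qed
  qed
qed

definition ones :: "real^'n" where "ones = (\<chi> i. 1)"

lemma core_part1:
  fixes E :: "'n::finite \<Rightarrow> 'n \<Rightarrow> bool"
  assumes irr: "\<And>i. \<not> E i i" and sym: "\<And>i j. E i j \<Longrightarrow> E j i"
    and wit: "E u w" "\<not> E u v" "\<not> E v w" "u \<noteq> v" "v \<noteq> w"
  defines "A \<equiv> (\<chi> i j. if E i j then 1 else 0) :: real^'n^'n"
  shows "\<exists>x0 \<alpha>. x0 \<bullet> ones = 0 \<and> norm x0 = 1 \<and> x0 \<bullet> (A *v x0) = \<alpha> \<and> \<alpha> > 0 \<and>
      (\<forall>y. y \<bullet> ones = 0 \<longrightarrow> y \<bullet> (A *v y) \<le> \<alpha> * (norm y)^2)"
proof -
  define Q where "Q = (\<lambda>x::real^'n. x \<bullet> (A *v x))"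
  define S where "S = {x::real^'n. x \<bullet> ones = 0} \<inter> sphere 0 1"
  have uw: "u \<noteq> w" using wit irr by auto
  have symw: "E w u" "\<not> E w v" "\<not> E v u" using sym wit by blast+
  define y0 where "y0 = ((\<chi> i. if i = u \<or> i = w then 1 else if i = v then -2 else 0) :: real^'n)"
  have y0ones: "y0 \<bullet> ones = 0"
  proof -
    have "y0 \<bullet> ones = (\<Sum>i\<in>UNIV. y0 $ i)" by (simp add: inner_vec_def ones_def)
    also have "\<dots> = (\<Sum>i\<in>{u,v,w}. y0 $ i)"
      by (rule sum.mono_neutral_right) (auto simp: y0_def)
    also have "\<dots> = 0" using uw wit by (simp add: y0_def)
    finally show ?thesis .
  qed
  have y0ne: "y0 \<noteq> 0"
  proof
    assume "y0 = 0" then have "y0 $ u = 0" by simp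
    then show False by (simp add: y0_def)
  qed
  have Qy0: "Q y0 = 2"
  proof -
    have "Q y0 = (\<Sum>i\<in>UNIV. \<Sum>j\<in>UNIV. y0$i * y0$j * A$i$j)"
      by (simp add: Q_def inner_vec_def matrix_vector_mult_def sum_distrib_left mult_ac)
    also have "\<dots> = (\<Sum>i\<in>{u,v,w}. \<Sum>j\<in>{u,v,w}. y0$i * y0$j * A$i$j)"
    proof -
      have "(\<Sum>i\<in>UNIV. \<Sum>j\<in>UNIV. y0$i * y0$j * A$i$j) = (\<Sum>i\<in>UNIV. \<Sum>j\<in>{u,v,w}. y0$i * y0$j * A$i$j)"
        by (intro sum.cong refl sum.mono_neutral_right) (auto simp: y0_def)
      also have "\<dots> = (\<Sum>i\<in>{u,v,w}. \<Sum>j\<in>{u,v,w}. y0$i * y0$j * A$i$j)"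
        by (rule sum.mono_neutral_right) (auto simp: y0_def)
      finally show ?thesis .
    qed
    also have "\<dots> = 2" using uw wit irr symw by (simp add: y0_def A_def)
    finally show ?thesis .
  qed
  have cS: "compact S"
  proof -
    have "closed {x::real^'n. x \<bullet> ones = 0}"
      by (rule closed_Collect_eq) (auto intro!: continuous_intros)
    then show ?thesis unfolding S_def by (simp add: Int_commute compact_Int_closed)
  qed
  have neS: "S \<noteq> {}"
  proof -
    have "y0 /\<^sub>R norm y0 \<in> S" using y0ne y0ones by (simp add: S_def)
    then show ?thesis by blast
  qed
  have contQ: "continuous_on S Q"
    unfolding Q_def by (intro continuous_intros linear_continuous_on bounded_linear_intros)
  obtain x0 where x0: "x0 \<in> S" and x0max: "\<And>y. y \<in> S \<Longrightarrow> Q y \<le> Q x0"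
    using continuous_attains_sup[OF cS neS contQ] by blast
  have Qscale: "Q (c *\<^sub>R x) = c^2 * Q x" for c x
    by (simp add: Q_def matrix_vector_mult_scaleR power2_eq_square)
  have bound: "Q y \<le> Q x0 * (norm y)^2" if "y \<bullet> ones = 0" for y
  proof (cases "y = 0")
    case True then show ?thesis by (simp add: Q_def)
  next
    case False
    then have "y /\<^sub>R norm y \<in> S" using that by (simp add: S_def)
    then have "Q (y /\<^sub>R norm y) \<le> Q x0" by (rule x0max)
    moreover have "Q y = (norm y)^2 * Q (y /\<^sub>R norm y)"
      using False by (simp add: Qscale power2_eq_square field_simps)
    ultimately show ?thesis by (metis mult.commute mult_left_mono zero_le_power2)
  qed
  have "0 < Q x0"
  proof -
    have "2 \<le> Q x0 * (norm y0)^2" using bound[OF y0ones] Qy0 by simp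
    moreover have "(norm y0)^2 > 0" using y0ne by simp
    ultimately show ?thesis by (metis not_less mult_nonpos_nonneg less_le not_numeral_le_zero order_trans zero_le_power2)
  qed
  then show ?thesis using x0 bound by (auto simp: S_def Q_def)
qed

lemma core_part2:
  fixes E :: "'n::finite \<Rightarrow> 'n \<Rightarrow> bool"
  assumes irr: "\<And>i. \<not> E i i" and sym: "\<And>i j. E i j \<Longrightarrow> E j i"
    and reg: "\<And>i. card {j. E i j} = k"
    and wit: "E u w" "\<not> E u v" "\<not> E v w" "u \<noteq> v" "v \<noteq> w"
  shows "\<exists>(F::'n \<Rightarrow> real^'n) \<alpha> \<gamma> x0. \<alpha> > 0 \<and> (\<forall>i j. F i \<bullet> F j = (if i = j then \<alpha> else 0) - (if E i j then 1 else 0) + \<gamma>)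
     \<and> (\<Sum>i\<in>UNIV. F i) = 0 \<and> (\<Sum>i\<in>UNIV. (x0 $ i) *\<^sub>R F i) = 0 \<and> x0 \<bullet> ones = 0 \<and> norm x0 = 1"
proof -
  define A where "A \<equiv> (\<chi> i j. if E i j then 1 else 0) :: real^'n^'n"
  obtain x0 \<alpha> where x0: "x0 \<bullet> ones = 0" "norm x0 = 1" "x0 \<bullet> (A *v x0) = \<alpha>" "\<alpha> > 0"
     and bound: "\<And>y. y \<bullet> ones = 0 \<Longrightarrow> y \<bullet> (A *v y) \<le> \<alpha> * (norm y)^2"
    using core_part1[OF irr sym wit] unfolding A_def by blast
  define n where "n = real CARD('n)"
  have npos: "n > 0" by (simp add: n_def)
  define \<gamma> where "\<gamma> = (k - \<alpha>) / n"
  define Gm where "Gm = ((\<chi> i j. (if i = j then \<alpha> else 0) - A$i$j + \<gamma>) :: real^'n^'n)"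
  have deg: "(\<Sum>j\<in>UNIV. A$i$j) = real k" for i
  proof -
    have "(\<Sum>j\<in>UNIV. A$i$j) = (\<Sum>j\<in>{j. E i j}. 1)"
      by (simp add: A_def sum.If_cases)
    also have "\<dots> = real k" using reg[of i] by simp
    finally show ?thesis .
  qed
  have Aones: "A *v ones = real k *\<^sub>R ones"
    by (simp add: vec_eq_iff matrix_vector_mult_def ones_def deg)
  have tA: "transpose A = A" by (auto simp: vec_eq_iff transpose_def A_def intro: sym)
  have Asym: "x \<bullet> (A *v y) = y \<bullet> (A *v x)" for x y
  proof -
    have "x \<bullet> (A *v y) = (x v* A) \<bullet> y" by (simp add: dot_lmul_matrix)
    also have "x v* A = A *v x" by (metis tA vector_transpose_matrix)
    finally show ?thesis by (simp add: inner_commute)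
  qed
  have onesones: "(ones::real^'n) \<bullet> ones = n" by (simp add: ones_def inner_vec_def n_def)
  have Gm_v: "Gm *v x = \<alpha> *\<^sub>R x - A *v x + (\<gamma> * (x \<bullet> ones)) *\<^sub>R ones" for x
  proof -
    have "(Gm *v x)$i = (\<alpha> *\<^sub>R x - A *v x + (\<gamma> * (x \<bullet> ones)) *\<^sub>R ones)$i" for i
    proof -
      have "(Gm *v x)$i = (\<Sum>j\<in>UNIV. (if i = j then \<alpha> * x$j else 0) - A$i$j * x$j + \<gamma> * x$j)"
        unfolding matrix_vector_mult_def by (simp add: Gm_def, intro sum.cong) (auto simp: algebra_simps)
      also have "\<dots> = \<alpha> * x$i - (\<Sum>j\<in>UNIV. A$i$j * x$j) + \<gamma> * (\<Sum>j\<in>UNIV. x$j)"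
        by (simp add: sum.distrib sum_subtractf sum_distrib_left)
      also have "\<dots> = (\<alpha> *\<^sub>R x - A *v x + (\<gamma> * (x \<bullet> ones)) *\<^sub>R ones)$i"
        by (simp add: matrix_vector_mult_def inner_vec_def ones_def)
      finally show ?thesis .
    qed
    then show ?thesis by (simp add: vec_eq_iff)
  qed
  have qG: "x \<bullet> (Gm *v x) = \<alpha> * (x \<bullet> x) - x \<bullet> (A *v x) + \<gamma> * (x \<bullet> ones)^2" for x
    by (simp add: Gm_v inner_diff_right inner_add_right power2_eq_square inner_commute[of x ones])
  have psdv: "x \<bullet> (Gm *v x) \<ge> 0" for x
  proof -
    define t where "t = (x \<bullet> ones) / n"
    define z where "z = x - t *\<^sub>R ones"
    have zo: "z \<bullet> ones = 0" using npos by (simp add: z_def t_def inner_diff_left onesones)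
    have xz: "x = z + t *\<^sub>R ones" by (simp add: z_def)
    have "x \<bullet> x = z \<bullet> z + t^2 * n"
      unfolding xz by (simp add: inner_add_left inner_add_right zo inner_commute[of ones z] onesones power2_eq_square)
    moreover have "x \<bullet> (A *v x) = z \<bullet> (A *v z) + t^2 * (k * n)"
    proof -
      have "ones \<bullet> (A *v z) = 0" using Asym[of ones z] by (simp add: Aones zo)
      then show ?thesis
        unfolding xz by (simp add: inner_add_left inner_add_right matrix_vector_right_distrib
          matrix_vector_mult_scaleR Aones zo onesones power2_eq_square algebra_simps)
    qed
    moreover have "x \<bullet> ones = t * n" using npos by (simp add: t_def)
    moreover have "z \<bullet> (A *v z) \<le> \<alpha> * (z \<bullet> z)" using bound[OF zo] by (simp add: power2_norm_eq_inner)
    ultimately show ?thesis using npos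
      by (simp add: qG \<gamma>_def power2_eq_square field_simps)
  qed
  have sumform: "(\<Sum>i\<in>UNIV. \<Sum>j\<in>UNIV. c i * c j * Gm$i$j) = (\<chi> i. c i) \<bullet> (Gm *v (\<chi> i. c i))" for c
    by (simp add: inner_vec_def matrix_vector_mult_def sum_distrib_left mult_ac)
  have psdG: "psd UNIV (\<lambda>i j. Gm$i$j)" unfolding psd_def sumform using psdv by blast
  have symG: "\<forall>i j. Gm$i$j = Gm$j$i" by (simp add: Gm_def A_def) (metis sym)
  have "\<exists>f. \<forall>j\<in>UNIV. \<forall>l\<in>UNIV. (\<Sum>k\<in>(UNIV::'n set). f j k * f l k) = Gm$j$l"
    by (rule chol[OF _ psdG symG]) simp
  then obtain f where f: "\<And>i j. (\<Sum>k\<in>(UNIV::'n set). f i k * f j k) = Gm$i$j" by blast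
  define F where "F i = ((\<chi> k. f i k) :: real^'n)" for i
  have FF: "F i \<bullet> F j = Gm$i$j" for i j by (simp add: F_def inner_vec_def f)
  have normsum: "(\<Sum>i\<in>UNIV. c i *\<^sub>R F i) \<bullet> (\<Sum>i\<in>UNIV. c i *\<^sub>R F i) = (\<chi> i. c i) \<bullet> (Gm *v (\<chi> i. c i))" for c
    by (simp add: inner_sum_left inner_sum_right FF sumform[symmetric] sum_distrib_left mult_ac) (intro sum.cong refl, metis symG)
  have "(\<Sum>i\<in>UNIV. F i) = 0"
  proof -
    have "(\<chi> i. 1) = (ones :: real^'n)" by (simp add: ones_def)
    then have "(\<Sum>i\<in>UNIV. (\<lambda>i. 1) i *\<^sub>R F i) \<bullet> (\<Sum>i\<in>UNIV. (\<lambda>i. 1) i *\<^sub>R F i) = ones \<bullet> (Gm *v ones)"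
      using normsum[of "\<lambda>i. 1"] by simp
    also have "\<dots> = 0" using npos Asym by (simp add: qG Aones onesones \<gamma>_def field_simps power2_eq_square)
    finally show ?thesis by simp
  qed
  moreover have "(\<Sum>i\<in>UNIV. (x0 $ i) *\<^sub>R F i) = 0"
  proof -
    have "(\<chi> i. x0 $ i) = x0" by (simp add: vec_eq_iff)
    then have "(\<Sum>i\<in>UNIV. x0 $ i *\<^sub>R F i) \<bullet> (\<Sum>i\<in>UNIV. x0 $ i *\<^sub>R F i) = x0 \<bullet> (Gm *v x0)"
      using normsum[of "\<lambda>i. x0 $ i"] by simp
    also have "\<dots> = 0" using x0 by (simp add: qG power2_norm_eq_inner[symmetric])
    finally show ?thesis by simp
  qed
  moreover have "\<forall>i j. F i \<bullet> F j = (if i = j then \<alpha> else 0) - (if E i j then 1 else 0) + \<gamma>"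
    by (simp add: FF Gm_def A_def)
  ultimately show ?thesis using x0 by blast
qed

lemma core3:
  fixes F :: "'n::finite \<Rightarrow> real^'n" and E :: "'n \<Rightarrow> 'n \<Rightarrow> bool"
  assumes card: "CARD('n) = CARD('d::finite) + 2"
   and apos: "\<alpha> > 0"
   and FF: "\<And>i j. F i \<bullet> F j = (if i = j then \<alpha> else 0) - (if E i j then 1 else 0) + \<gamma>"
   and irr: "\<And>i. \<not> E i i"
   and s1: "(\<Sum>i\<in>UNIV. F i) = 0" and s2: "(\<Sum>i\<in>UNIV. (x0 $ i) *\<^sub>R F i) = 0"
   and x0: "x0 \<bullet> ones = 0" "norm x0 = 1"
   and nonedge: "u \<noteq> v" "\<not> E u v"
  shows "\<exists>(p::'n \<Rightarrow> real^'d) r. 0 < r \<and> (\<forall>i. norm (p i) = r) \<and>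
     (\<forall>i j. i \<noteq> j \<longrightarrow> dist (p i) (p j) = (if E i j then sqrt (2*\<alpha>+2) else sqrt (2*\<alpha>)))"
proof -
  obtain a b where ab: "x0 $ a \<noteq> x0 $ b"
  proof (rule ccontr)
    assume "\<not> thesis"
    then have all: "\<And>i. x0 $ i = x0 $ u" using that by metis
    have "x0 \<bullet> ones = (\<Sum>i\<in>UNIV. x0 $ i)" by (simp add: inner_vec_def ones_def)
    also have "\<dots> = (\<Sum>i\<in>(UNIV::'n set). x0 $ u)" by (rule sum.cong[OF refl], rule all)
    also have "\<dots> = real CARD('n) * x0 $ u" by simp
    finally have "x0 $ u = 0" using x0 by simp
    then have "x0 = 0" using all by (metis vec_eq_iff zero_index)
    then show False using x0 by simp
  qed
  then have "a \<noteq> b" by auto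
  define D where "D = UNIV - {a, b}"
  have U: "(UNIV::'n set) = insert a (insert b D)" by (auto simp: D_def)
  have aD: "a \<notin> D" "b \<notin> D" "a \<notin> insert b D" using \<open>a \<noteq> b\<close> by (auto simp: D_def)
  have spD: "F i \<in> span (F ` D)" if "i \<in> D" for i using that by (simp add: span_base)
  have "(\<Sum>i\<in>UNIV. (x0 $ i - x0 $ a) *\<^sub>R F i) = 0"
    using s1 s2 by (simp add: scaleR_left_diff_distrib sum_subtractf scaleR_sum_right[symmetric])
  then have "(x0 $ b - x0 $ a) *\<^sub>R F b + (\<Sum>i\<in>D. (x0 $ i - x0 $ a) *\<^sub>R F i) = 0"
    using aD by (subst (asm) U) simp
  then have e: "(x0 $ b - x0 $ a) *\<^sub>R F b = - (\<Sum>i\<in>D. (x0 $ i - x0 $ a) *\<^sub>R F i)"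
    by (simp only: eq_neg_iff_add_eq_0)
  have "F b = (1 / (x0 $ b - x0 $ a)) *\<^sub>R ((x0 $ b - x0 $ a) *\<^sub>R F b)" using ab by simp
  also have "\<dots> = (- 1 / (x0 $ b - x0 $ a)) *\<^sub>R (\<Sum>i\<in>D. (x0 $ i - x0 $ a) *\<^sub>R F i)"
    by (simp only: e scaleR_minus_right) simp
  finally have "F b = (- 1 / (x0 $ b - x0 $ a)) *\<^sub>R (\<Sum>i\<in>D. (x0 $ i - x0 $ a) *\<^sub>R F i)" .
  then have hb: "F b \<in> span (F ` D)"
    by (metis (no_types, lifting) span_scale span_sum spD)
  have "F a + F b + (\<Sum>i\<in>D. F i) = 0" using s1 aD by (subst (asm) U) (simp add: add.assoc)
  then have "F a = - F b - (\<Sum>i\<in>D. F i)" by (simp add: eq_neg_iff_add_eq_0[symmetric] algebra_simps)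
  then have ha: "F a \<in> span (F ` D)"
    by (metis hb span_diff span_neg span_sum spD)
  have rng: "range F \<subseteq> span (F ` D)"
  proof (rule subsetI)
    fix y assume "y \<in> range F"
    then obtain i where "y = F i" by blast
    then show "y \<in> span (F ` D)" using ha hb spD[of i] by (cases "i = a \<or> i = b") (auto simp: D_def)
  qed
  have cardD: "card D = CARD('d)"
    using card \<open>a \<noteq> b\<close> by (simp add: D_def card_Diff_subset)
  have "dim (span (range F)) \<le> CARD('d)"
  proof -
    have "dim (range F) \<le> card (F ` D)" by (rule dim_le_card[OF rng]) simp
    also have "\<dots> \<le> card D" by (rule card_image_le) simp
    finally show ?thesis using cardD by simp
  qed
  then have "dim (span (range F)) \<le> dim (UNIV :: (real^'d) set)" by simp
  then obtain T :: "(real^'d) set" where T: "subspace T" "dim T = dim (span (range F))"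
    by (metis choose_subspace_of_subspace)
  obtain g :: "real^'n \<Rightarrow> real^'d" where g: "linear g" "\<And>x. x \<in> span (range F) \<Longrightarrow> norm (g x) = norm x"
    using isometries_subspaces[OF subspace_span T(1) T(2)[symmetric]] by metis
  define p where "p i = g (F i)" for i
  define r where "r = sqrt (\<alpha> + \<gamma>)"
  have nF: "norm (F i) = r" for i by (simp add: norm_eq_sqrt_inner FF irr r_def)
  have np: "norm (p i) = r" for i using g(2)[of "F i"] nF by (simp add: p_def span_base)
  have dF: "norm (F i - F j) = (if E i j then sqrt (2*\<alpha>+2) else sqrt (2*\<alpha>))" if "i \<noteq> j" for i j
  proof -
    have "(F i - F j) \<bullet> (F i - F j) = F i \<bullet> F i + F j \<bullet> F j - 2 * (F i \<bullet> F j)"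
      by (simp add: inner_diff_left inner_diff_right inner_commute[of "F j" "F i"])
    also have "\<dots> = (if E i j then 2*\<alpha>+2 else 2*\<alpha>)" using that by (simp add: FF irr)
    finally show ?thesis by (simp add: norm_eq_sqrt_inner)
  qed
  have dp: "dist (p i) (p j) = (if E i j then sqrt (2*\<alpha>+2) else sqrt (2*\<alpha>))" if "i \<noteq> j" for i j
  proof -
    have "dist (p i) (p j) = norm (g (F i - F j))" by (simp add: p_def dist_norm linear_diff[OF g(1)])
    also have "\<dots> = norm (F i - F j)" by (rule g(2)) (simp add: span_diff span_base)
    finally show ?thesis using dF[OF that] by simp
  qed
  have "r > 0"
  proof (rule ccontr)
    assume "\<not> r > 0"
    then have "r = 0" using nF[of u] by (metis norm_ge_zero order_less_le)
    then have "F u = 0" "F v = 0" using nF by auto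
    then have "norm (F u - F v) = 0" by simp
    moreover have "norm (F u - F v) = sqrt (2*\<alpha>)" using dF[OF nonedge(1)] nonedge by simp
    ultimately show False using apos by simp
  qed
  then show ?thesis using np dp by blast
qed

lemma witness_exists:
  assumes sg: "simple_graph V E" and ncm: "\<not> complete_multipartite V E"
  shows "\<exists>u v w. u \<in> V \<and> v \<in> V \<and> w \<in> V \<and> E u w \<and> \<not> E u v \<and> \<not> E v w \<and> u \<noteq> v \<and> v \<noteq> w"
proof (rule ccontr)
  assume nw: "\<not> ?thesis"
  have irr: "\<And>x. \<not> E x x" and sym: "\<And>x y. E x y \<Longrightarrow> E y x"
    using sg by (auto simp: simple_graph_def)
  define r where "r = {(x, y). x \<in> V \<and> y \<in> V \<and> (x = y \<or> \<not> E x y)}"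
  have eq: "equiv V r"
  proof (rule equivI)
    show "refl_on V r" by (auto simp: refl_on_def r_def)
    show "r \<subseteq> V \<times> V" by (auto simp: r_def)
    show "Relation.sym r" by (auto simp: Relation.sym_def r_def dest: sym)
    show "trans r"
    proof (rule transI)
      fix x y z assume "(x, y) \<in> r" "(y, z) \<in> r"
      then show "(x, z) \<in> r" using nw by (auto simp: r_def) 
    qed
  qed
  have "complete_multipartite V E"
    unfolding complete_multipartite_def
  proof (intro exI conjI ballI)
    show "partition_on V (V // r)" by (rule partition_on_quotient[OF eq])
    fix x y assume x: "x \<in> V" and y: "y \<in> V"
    have "(\<exists>A\<in>V // r. x \<in> A \<and> y \<in> A) \<longleftrightarrow> (x, y) \<in> r"
    proof
      assume "\<exists>A\<in>V // r. x \<in> A \<and> y \<in> A"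
      then obtain A where "A \<in> V // r" "x \<in> A" "y \<in> A" by blast
      then show "(x, y) \<in> r" using in_quotient_imp_in_rel[OF eq] by blast
    next
      assume "(x, y) \<in> r"
      moreover have "r `` {x} \<in> V // r" using x by (rule quotientI)
      moreover have "x \<in> r `` {x}" using x by (auto simp: r_def)
      ultimately show "\<exists>A\<in>V // r. x \<in> A \<and> y \<in> A" by blast
    qed
    then show "E x y \<longleftrightarrow> \<not> (\<exists>A\<in>V // r. x \<in> A \<and> y \<in> A)"
      using x y irr by (auto simp: r_def)
  qed
  then show False using ncm by blast
qed

theorem corollary6p2:
  fixes V :: "'v set" and E :: "'v \<Rightarrow> 'v \<Rightarrow> bool"
  assumes "simple_graph V E"
    and "regular_graph V E"
    and "card V = CARD('d::finite) + 2"
    and "\<not> complete_multipartite V E"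
  shows "\<exists>f :: 'v \<Rightarrow> real ^ 'd. spherical_rep V E f"
proof -
  have fin: "finite V" and inV: "\<And>x y. E x y \<Longrightarrow> x \<in> V \<and> y \<in> V"
    and irr: "\<And>x. \<not> E x x" and sym: "\<And>x y. E x y \<Longrightarrow> E y x"
    using assms(1) by (auto simp: simple_graph_def)
  obtain k where reg: "\<And>x. x \<in> V \<Longrightarrow> degree V E x = k"
    using assms(2) by (auto simp: regular_graph_def)
  obtain u v w where uvw: "u \<in> V" "v \<in> V" "w \<in> V" "E u w" "\<not> E u v" "\<not> E v w" "u \<noteq> v" "v \<noteq> w"
    using witness_exists[OF assms(1) assms(4)] by blast
  have cardN: "CARD('d option option) = CARD('d) + 2" by (simp add: card_UNIV_option)
  then have "card (UNIV :: 'd option option set) = card V" using assms(3) by simp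
  moreover have finN: "finite (UNIV :: 'd option option set)" by simp
  ultimately obtain \<beta> :: "'d option option \<Rightarrow> 'v" where bij: "bij_betw \<beta> UNIV V"
    using finite_same_card_bij[OF finN fin] by blast
  define \<iota> where "\<iota> = inv_into UNIV \<beta>"
  have \<beta>\<iota>: "\<beta> (\<iota> x) = x" if "x \<in> V" for x
    using bij that by (simp add: \<iota>_def bij_betw_inv_into_right)
  have \<iota>\<beta>: "\<iota> (\<beta> i) = i" for i
    using bij by (simp add: \<iota>_def bij_betw_inv_into_left)
  have \<beta>V: "\<beta> i \<in> V" for i using bij by (auto simp: bij_betw_def)
  define E' where "E' i j = E (\<beta> i) (\<beta> j)" for i j
  have irr': "\<And>i. \<not> E' i i" by (simp add: E'_def irr)
  have sym': "\<And>i j. E' i j \<Longrightarrow> E' j i" by (simp add: E'_def sym)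
  have reg': "card {j. E' i j} = k" for i
  proof -
    have inj: "inj \<beta>" using bij by (simp add: bij_betw_def)
    have "\<beta> ` {j. E' i j} = {x \<in> V. E (\<beta> i) x}"
    proof
      show "\<beta> ` {j. E' i j} \<subseteq> {x \<in> V. E (\<beta> i) x}" by (auto simp: E'_def \<beta>V)
      show "{x \<in> V. E (\<beta> i) x} \<subseteq> \<beta> ` {j. E' i j}"
      proof
        fix x assume "x \<in> {x \<in> V. E (\<beta> i) x}"
        then have "x = \<beta> (\<iota> x)" "E' i (\<iota> x)" using \<beta>\<iota> by (auto simp: E'_def)
        then show "x \<in> \<beta> ` {j. E' i j}" by blast
      qed
    qed
    then have "card {j. E' i j} = card {x \<in> V. E (\<beta> i) x}"
      by (metis card_image inj inj_on_subset subset_UNIV)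
    then show ?thesis using reg[OF \<beta>V] by (simp add: degree_def)
  qed
  have wit': "E' (\<iota> u) (\<iota> w)" "\<not> E' (\<iota> u) (\<iota> v)" "\<not> E' (\<iota> v) (\<iota> w)" "\<iota> u \<noteq> \<iota> v" "\<iota> v \<noteq> \<iota> w"
    using uvw \<beta>\<iota> by (auto simp: E'_def) (metis \<beta>\<iota>)+
  obtain F :: "'d option option \<Rightarrow> real^'d option option" and \<alpha> \<gamma> x0 where
    Fp: "\<alpha> > 0" "\<forall>i j. F i \<bullet> F j = (if i = j then \<alpha> else 0) - (if E' i j then 1 else 0) + \<gamma>"
      "(\<Sum>i\<in>UNIV. F i) = 0" "(\<Sum>i\<in>UNIV. (x0 $ i) *\<^sub>R F i) = 0" "x0 \<bullet> ones = 0" "norm x0 = 1"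
    using core_part2[OF irr' sym' reg' wit'] by blast
  obtain p :: "'d option option \<Rightarrow> real^'d" and r where
    pp: "0 < r" "\<And>i. norm (p i) = r"
      "\<And>i j. i \<noteq> j \<Longrightarrow> dist (p i) (p j) = (if E' i j then sqrt (2*\<alpha>+2) else sqrt (2*\<alpha>))"
    using core3[OF cardN Fp(1) _ irr' Fp(3) Fp(4) Fp(5) Fp(6) wit'(4) wit'(2)] Fp(2) by blast
  define a where "a = sqrt (2*\<alpha>+2)"
  define b where "b = sqrt (2*\<alpha>)"
  have ab: "0 < b" "b < a" using Fp(1) by (auto simp: a_def b_def)
  have dp: "\<And>i j. i \<noteq> j \<Longrightarrow> dist (p i) (p j) = (if E' i j then a else b)"
    using pp(3) by (simp add: a_def b_def)
  have pinj: "p i = p j \<longleftrightarrow> i = j" for i j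
    using dp[of i j] ab by (cases "i = j") (auto split: if_splits)
  define f where "f x = p (\<iota> x)" for x
  have fV: "f ` V = range p"
  proof
    show "f ` V \<subseteq> range p" by (auto simp: f_def)
    show "range p \<subseteq> f ` V"
    proof
      fix y assume "y \<in> range p"
      then obtain i where "y = p i" by blast
      then have "y = f (\<beta> i)" by (simp add: f_def \<iota>\<beta>)
      then show "y \<in> f ` V" using \<beta>V by blast
    qed
  qed
  have uw: "\<iota> u \<noteq> \<iota> w" using wit'(1) irr' by metis
  have dist_set: "distances (range p) = {a, b}"
  proof
    show "distances (range p) \<subseteq> {a, b}"
      using dp pinj by (auto simp: distances_def)
    have "a \<in> distances (range p)"
      unfolding distances_def using dp[OF uw] wit'(1) pinj uw by auto
    moreover have "b \<in> distances (range p)"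
    proof -
      have bb: "b = dist (p (\<iota> u)) (p (\<iota> v))" using dp[OF wit'(4)] wit'(2) by simp
      have "p (\<iota> u) \<noteq> p (\<iota> v)" using pinj wit'(4) by simp
      then show ?thesis unfolding distances_def using bb by blast
    qed
    ultimately show "{a, b} \<subseteq> distances (range p)" by blast
  qed
  have maxd: "Max (distances (range p)) = a" using ab by (simp add: dist_set)
  have "spherical_rep V E f"
    unfolding spherical_rep_def
  proof (intro conjI ballI)
    show "inj_on f V"
    proof (rule inj_onI)
      fix x y assume "x \<in> V" "y \<in> V" "f x = f y"
      then show "x = y" using pinj \<beta>\<iota> by (metis f_def)
    qed
    show "two_distance_set (f ` V)"
      using ab by (simp add: two_distance_set_def fV dist_set)
    show "on_sphere (f ` V)"
      unfolding on_sphere_def fV using pp(1,2) by (intro exI[of _ 0] exI[of _ r]) auto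
    fix x y assume x: "x \<in> V" and y: "y \<in> V"
    have Exy: "E x y = E' (\<iota> x) (\<iota> y)" using x y \<beta>\<iota> by (simp add: E'_def)
    show "E x y \<longleftrightarrow> assoc_adj (f ` V) (f x) (f y)"
    proof
      assume "E x y"
      then have "x \<noteq> y" using irr by metis
      then have "\<iota> x \<noteq> \<iota> y" using x y \<beta>\<iota> by metis
      then have "f x \<noteq> f y" "dist (f x) (f y) = a"
        using dp[of "\<iota> x" "\<iota> y"] \<open>E x y\<close> Exy pinj by (auto simp: f_def)
      then show "assoc_adj (f ` V) (f x) (f y)"
        unfolding assoc_adj_def fV maxd using x y by (auto simp: f_def)
    next
      assume "assoc_adj (f ` V) (f x) (f y)"
      then have "f x \<noteq> f y" "dist (f x) (f y) = a" by (auto simp: assoc_adj_def fV maxd)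
      then have "\<iota> x \<noteq> \<iota> y" by (auto simp: f_def)
      then show "E x y" using dp[of "\<iota> x" "\<iota> y"] \<open>dist (f x) (f y) = a\<close> ab Exy
        by (auto simp: f_def split: if_splits)
    qed
  qed
  then show ?thesis by blast
qed

end
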